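(* Let $\min(p,q)\ge 2$. Let $M_0, M_1, M_2$ be three Minkowski patches of $\widetilde{\mathrm{Ein}}^{p,q}$ and $s : M_0 \rightarrow \mathbb{R}^{p,q}$ a stereographic projection. Assume that $s(M_0 \cap M_1) = H_{v,\alpha}$ and $s(M_0 \cap M_2) = H_{v,\beta}$ for some $v \in \mathcal{C}\setminus\{0\}$ and $\alpha,\beta \in \mathbb{R}$. Then $\partial M_0 \cap M_1 = \partial M_0 \cap M_2$.
   Context: $\widetilde{\mathrm{Ein}}^{p,q}\cong\mathbb{S}^p\times\mathbb{S}^q$ is the set of isotropic vectors of Euclidean norm 1 in $\mathbb{R}^{p+1,q+1}$, double covering $\mathrm{Ein}^{p,q}$ (isotropic lines) via $\pi_{\mathbf{X}}$. Minkowski patches of $\widetilde{\mathrm{Ein}}^{p,q}$ are the connected components of $\pi_{\mathbf{X}}^{-1}(\{[u]:B(w,u)\neq0\})$, $w$ isotropic; $\partial M_0$ denotes the topological boundary in $\widetilde{\mathrm{Ein}}^{p,q}$. A stereographic projection is a conformal diffeomorphism from a Minkowski patch onto $\mathbb{R}^{p,q}$. On $\mathbb{R}^{p,q}$ ($n=p+q$): $b(v,w) = -v_1w_1 - \cdots - v_pw_p + v_{p+1}w_{p+1} + \cdots + v_nw_n$, $\mathcal{C}=\{v:b(v,v)=0\}$, $H_{v,\alpha}=\{w: b(v,w)>\alpha\}$. *)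

theory Defs
  imports "HOL-Analysis.Analysis"
begin

text \<open>On R^{p,q} = real^'p x real^'q this is b; on R^{p+1,q+1} =
(real x real^'p) x (real x real^'q) this is B.\<close>
definition pform :: "('a::real_inner \<times> 'b::real_inner) \<Rightarrow> ('a \<times> 'b) \<Rightarrow> real" where
  "pform u w = - (fst u \<bullet> fst w) + (snd u \<bullet> snd w)"

definition Ein_tilde :: "('a::real_inner \<times> 'b::real_inner) set" where
  "Ein_tilde = {u. pform u u = 0 \<and> norm u = 1}"

definition minkowski_patch :: "('a::real_inner \<times> 'b::real_inner) set \<Rightarrow> bool" where
  "minkowski_patch M \<longleftrightarrow> (\<exists>w. w \<noteq> 0 \<and> pform w w = 0 \<and>
       M \<in> components {u \<in> Ein_tilde. pform w u \<noteq> 0})"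

primrec dder :: "'a list \<Rightarrow> ('a::real_normed_vector \<Rightarrow> 'b::real_normed_vector) \<Rightarrow> 'a \<Rightarrow> 'b" where
  "dder [] f = f"
| "dder (v # vs) f = (\<lambda>x. frechet_derivative (dder vs f) (at x) v)"

definition smooth_on :: "'a::real_normed_vector set \<Rightarrow> ('a \<Rightarrow> 'b::real_normed_vector) \<Rightarrow> bool" where
  "smooth_on U f \<longleftrightarrow> open U \<and> (\<forall>vs. \<forall>x\<in>U. dder vs f differentiable (at x))"

definition smooth_map_on :: "'a::real_normed_vector set \<Rightarrow> ('a \<Rightarrow> 'b::real_normed_vector) \<Rightarrow> bool" where
  "smooth_map_on S f \<longleftrightarrow> (\<forall>x\<in>S. \<exists>U F. x \<in> U \<and> smooth_on U F \<and> (\<forall>y\<in>U \<inter> S. F y = f y))"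

definition diffeo_betw :: "'a::real_normed_vector set \<Rightarrow> 'b::real_normed_vector set \<Rightarrow> ('a \<Rightarrow> 'b) \<Rightarrow> bool" where
  "diffeo_betw S T f \<longleftrightarrow> bij_betw f S T \<and> smooth_map_on S f \<and> smooth_map_on T (inv_into S f)"

text \<open>Tangent space of Ein_tilde at x (kernel of the differentials of the defining
equations pform u u = 0 and u . u = 1).\<close>
definition ein_tangent :: "('a::real_inner \<times> 'b::real_inner) \<Rightarrow> ('a \<times> 'b) set" where
  "ein_tangent x = {u. pform x u = 0 \<and> x \<bullet> u = 0}"

text \<open>Stereographic projection: conformal diffeomorphism from the patch M onto R^{p,q}
(conformal structure on Ein_tilde induced by B restricted to tangent spaces).\<close>
definition stereographic_projection ::
  "('a::real_inner \<times> 'b::real_inner) set \<Rightarrow>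
   ('a \<times> 'b \<Rightarrow> ('e::real_inner \<times> 'f::real_inner)) \<Rightarrow> bool" where
  "stereographic_projection M s \<longleftrightarrow> diffeo_betw M UNIV s \<and>
     (\<forall>x\<in>M. \<exists>D lam. (s has_derivative D) (at x within M) \<and> lam > 0 \<and>
        (\<forall>u\<in>ein_tangent x. \<forall>w\<in>ein_tangent x. pform (D u) (D w) = lam * pform u w))"

definition halfspace :: "('a::real_inner \<times> 'b::real_inner) \<Rightarrow> real \<Rightarrow> ('a \<times> 'b) set" where
  "halfspace v \<alpha> = {w. pform v w > \<alpha>}"

end

theory Submission
  imports Defs
begin


definition jj :: "('a::real_inner \<times> 'b::real_inner) \<Rightarrow> 'a \<times> 'b" where
  "jj w = (- fst w, snd w)"

lemma pform_jj: "pform w u = jj w \<bullet> u"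
  by (simp add: pform_def jj_def inner_prod_def)

lemma jj_jj[simp]: "jj (jj w) = w" by (simp add: jj_def)
lemma jj_add: "jj (a + b) = jj a + jj b" by (simp add: jj_def)
lemma jj_scale: "jj (c *\<^sub>R a) = c *\<^sub>R jj a" by (simp add: jj_def)
lemma jj_minus: "jj (- a) = - jj a" by (simp add: jj_def)
lemma jj_diff: "jj (a - b) = jj a - jj b" by (simp add: jj_def)
lemma jj_eq0[simp]: "jj a = 0 \<longleftrightarrow> a = 0" by (cases a) (auto simp: jj_def zero_prod_def)
lemma norm_jj[simp]: "norm (jj a) = norm a"
  by (simp add: norm_eq_sqrt_inner jj_def inner_prod_def)

lemma pform_sym: "pform u w = pform w u"
  by (simp add: pform_def inner_commute)
lemma pform_add_left: "pform (a + b) u = pform a u + pform b u"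
  by (simp add: pform_def inner_add_left)
lemma pform_add_right: "pform u (a + b) = pform u a + pform u b"
  by (simp add: pform_def inner_add_right)
lemma pform_diff_left: "pform (a - b) u = pform a u - pform b u"
  by (simp add: pform_def inner_diff_left)
lemma pform_diff_right: "pform u (a - b) = pform u a - pform u b"
  by (simp add: pform_def inner_diff_right)
lemma pform_scale_left: "pform (c *\<^sub>R a) u = c * pform a u"
  by (simp add: pform_def algebra_simps)
lemma pform_scale_right: "pform u (c *\<^sub>R a) = c * pform u a"
  by (simp add: pform_def algebra_simps)
lemma pform_minus_left: "pform (- a) u = - pform a u"
  by (simp add: pform_def algebra_simps)
lemmas pform_simps = pform_add_left pform_add_right pform_diff_left pform_diff_right
  pform_scale_left pform_scale_right pform_minus_left

lemma pform_jj_self: "pform w (jj w) = (norm w)^2"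
  by (simp add: pform_def jj_def power2_norm_eq_inner inner_prod_def)

lemma pform_jj_jj: "pform (jj w) (jj w) = pform w w"
  by (simp add: pform_def jj_def)

lemma Ein_scale:
  assumes "pform n n = 0" "n \<noteq> 0"
  shows "(1 / norm n) *\<^sub>R n \<in> Ein_tilde"
  using assms by (simp add: Ein_tilde_def pform_simps)




lemma pos_comb_nonneg:
  fixes a b :: real
  assumes "\<And>S T. S > 0 \<Longrightarrow> T > 0 \<Longrightarrow> a*S + b*T > 0"
  shows "a \<ge> 0"
proof (rule ccontr)
  assume "\<not> a \<ge> 0" hence a: "a < 0" by simp
  define T where "T = -a / (2*(\<bar>b\<bar>+1))"
  have T: "T > 0" using a unfolding T_def by (intro divide_pos_pos) auto
  have "b*T \<le> \<bar>b\<bar>*T" using T by (simp add: mult_right_mono)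
  also have "\<bar>b\<bar>*T < -a/2" using a unfolding T_def
    by (simp add: field_simps)
  finally have "a*1 + b*T < 0" using a by linarith
  with assms[of 1 T] T show False by simp
qed

lemma kill_resid:
  fixes g0 g1 g2 r y0 :: "'a::real_inner"
  assumes H: "\<forall>y. g0\<bullet>y > 0 \<and> g1\<bullet>y > 0 \<longrightarrow> g2\<bullet>y > 0"
    and ne: "g0\<bullet>y0 > 0" "g1\<bullet>y0 > 0"
    and r: "r\<bullet>g0 = 0" "r\<bullet>g1 = 0" "g2\<bullet>r = r\<bullet>r"
  shows "r = 0"
proof (rule ccontr)
  assume "r \<noteq> 0"
  hence rr: "r\<bullet>r > 0" by simp
  define y where "y = y0 - ((g2\<bullet>y0 + 1)/(r\<bullet>r)) *\<^sub>R r"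
  have "g0\<bullet>y = g0\<bullet>y0" "g1\<bullet>y = g1\<bullet>y0"
    using r by (simp_all add: y_def inner_diff_right inner_commute)
  hence "g2\<bullet>y > 0" using H ne by auto
  moreover have "g2\<bullet>y = -1" using rr r
    by (simp add: y_def inner_diff_right)
  ultimately show False by simp
qed

lemma farkas2:
  fixes g0 g1 g2 y0 :: "'a::real_inner"
  assumes H: "\<forall>y. g0\<bullet>y > 0 \<and> g1\<bullet>y > 0 \<longrightarrow> g2\<bullet>y > 0"
    and ne: "g0\<bullet>y0 > 0" "g1\<bullet>y0 > 0"
  shows "\<exists>a b. a \<ge> 0 \<and> b \<ge> 0 \<and> g2 = a *\<^sub>R g0 + b *\<^sub>R g1"
proof -
  have g0: "g0 \<noteq> 0" using ne by auto
  hence g00: "g0\<bullet>g0 > 0" by simp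
  define k where "k = (g1\<bullet>g0)/(g0\<bullet>g0)"
  define h where "h = g1 - k *\<^sub>R g0"
  have hg0: "h\<bullet>g0 = 0" using g00 by (simp add: h_def k_def inner_diff_left)
  have g1eq: "g1 = k *\<^sub>R g0 + h" by (simp add: h_def)
  show ?thesis
  proof (cases "h = 0")
    case False
    hence hh: "h\<bullet>h > 0" by simp
    define l where "l = (g2\<bullet>g0)/(g0\<bullet>g0)"
    define m where "m = (g2\<bullet>h)/(h\<bullet>h)"
    define r where "r = g2 - l *\<^sub>R g0 - m *\<^sub>R h"
    have r0: "r\<bullet>g0 = 0" using g00 hg0
      by (simp add: r_def l_def m_def inner_diff_left)
    have rh: "r\<bullet>h = 0" using hh hg0
      by (simp add: r_def l_def m_def inner_diff_left inner_commute[of g0 h])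
    have r1: "r\<bullet>g1 = 0" using r0 rh by (simp add: g1eq inner_add_right)
    have "g2 = r + l *\<^sub>R g0 + m *\<^sub>R h" by (simp add: r_def)
    moreover have "g0\<bullet>r = 0" "h\<bullet>r = 0" using r0 rh by (simp_all add: inner_commute)
    ultimately have "g2\<bullet>r = r\<bullet>r" by (simp add: inner_add_left)
    hence "r = 0" using kill_resid[OF H ne r0 r1] by simp
    hence g2eq: "g2 = (l - m*k) *\<^sub>R g0 + m *\<^sub>R g1"
      by (simp add: r_def g1eq algebra_simps)
    have pos: "(l - m*k)*S + m*T > 0" if "S > 0" "T > 0" for S T
    proof -
      define y where "y = (S/(g0\<bullet>g0)) *\<^sub>R g0 + ((T - k*S)/(h\<bullet>h)) *\<^sub>R h"
      have "g0\<bullet>y = S" using g00 hg0 by (simp add: y_def inner_add_right inner_commute)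
      moreover have "g1\<bullet>y = T" using g00 hh hg0
        by (simp add: y_def g1eq inner_add_right inner_add_left inner_commute field_simps)
      ultimately have "g2\<bullet>y > 0" using H that by auto
      also have "g2\<bullet>y = (l - m*k)*(g0\<bullet>y) + m*(g1\<bullet>y)"
        by (simp add: g2eq inner_add_left)
      finally show ?thesis using \<open>g0\<bullet>y = S\<close> \<open>g1\<bullet>y = T\<close> by simp
    qed
    have "l - m*k \<ge> 0" by (rule pos_comb_nonneg) (use pos in auto)
    moreover have "m \<ge> 0" by (rule pos_comb_nonneg[of m "l - m*k"]) (use pos in \<open>auto simp: add.commute\<close>)
    ultimately show ?thesis using g2eq by blast
  next
    case True
    hence g1k: "g1 = k *\<^sub>R g0" by (simp add: g1eq)
    have "k > 0" using ne g1k by (simp add: zero_less_mult_iff)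
    define l where "l = (g2\<bullet>g0)/(g0\<bullet>g0)"
    define r where "r = g2 - l *\<^sub>R g0"
    have r0: "r\<bullet>g0 = 0" using g00 by (simp add: r_def l_def inner_diff_left)
    have r1: "r\<bullet>g1 = 0" using r0 by (simp add: g1k)
    have "g2 = r + l *\<^sub>R g0" by (simp add: r_def)
    moreover have "g0\<bullet>r = 0" using r0 by (simp add: inner_commute)
    ultimately have "g2\<bullet>r = r\<bullet>r" by (simp add: inner_add_left)
    hence "r = 0" using kill_resid[OF H ne r0 r1] by simp
    hence g2eq: "g2 = l *\<^sub>R g0" by (simp add: r_def)
    have "g2\<bullet>g0 > 0" using H g00 \<open>k > 0\<close> by (simp add: g1k)
    hence "l \<ge> 0" using g00 by (simp add: l_def)
    thus ?thesis using g2eq by (intro exI[of _ l] exI[of _ 0]) auto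
  qed
qed




lemma lin_recip_zero:
  fixes C m k :: real
  assumes H: "\<And>t. t \<noteq> 0 \<Longrightarrow> C + m*t + k/t > 0"
  shows "m = 0"
proof (rule ccontr)
  assume m: "m \<noteq> 0"
  define T where "T = (\<bar>C\<bar> + \<bar>k\<bar> + 1)/\<bar>m\<bar> + 1"
  have T1: "T \<ge> 1" unfolding T_def using m by (simp add: divide_nonneg_pos)
  have mT: "\<bar>m\<bar> * T = \<bar>C\<bar> + \<bar>k\<bar> + 1 + \<bar>m\<bar>" unfolding T_def using m
    by (simp add: field_simps)
  define t where "t = - sgn m * T"
  have t0: "t \<noteq> 0" using T1 m by (simp add: t_def sgn_if)
  have mt: "m*t = - (\<bar>m\<bar>*T)" using m by (simp add: t_def sgn_if)
  have "\<bar>k/t\<bar> = \<bar>k\<bar>/T" using m T1 by (simp add: t_def sgn_if abs_divide)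
  also have "\<dots> \<le> \<bar>k\<bar>/1" using T1 by (intro divide_left_mono) auto
  finally have "k/t \<le> \<bar>k\<bar>" by linarith
  hence "C + m*t + k/t < 0" using mt mT abs_ge_self[of C] by linarith
  with H[OF t0] show False by simp
qed

lemma hyperbola_pos:
  fixes K C d c :: real
  assumes H: "\<And>X Y. X^2 - Y^2 = K \<Longrightarrow> C + d*X + c*Y > 0"
  shows "d = 0 \<and> c = 0 \<and> C > 0"
proof -
  have P1: "C + ((d+c)/2)*t + ((d-c)*K/2)/t > 0" if "t \<noteq> 0" for t
  proof -
    have "((t + K/t)/2)^2 - ((t - K/t)/2)^2 = K" using that
      by (simp add: power2_eq_square field_simps)
    from H[OF this] have "C + d*((t + K/t)/2) + c*((t - K/t)/2) > 0" .
    moreover have "d*((t + K/t)/2) + c*((t - K/t)/2) = ((d+c)/2)*t + ((d-c)*K/2)/t"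
      using that by (simp add: field_simps)
    ultimately show ?thesis by linarith
  qed
  have P2: "C + ((d-c)/2)*t + ((d+c)*K/2)/t > 0" if "t \<noteq> 0" for t
  proof -
    have "((t + K/t)/2)^2 - (-(t - K/t)/2)^2 = K" using that
      by (simp add: power2_eq_square field_simps)
    from H[OF this] have "C + d*((t + K/t)/2) + c*(-(t - K/t)/2) > 0" .
    moreover have "d*((t + K/t)/2) + c*(-(t - K/t)/2) = ((d-c)/2)*t + ((d+c)*K/2)/t"
      using that by (simp add: field_simps)
    ultimately show ?thesis by linarith
  qed
  have "(d+c)/2 = 0" by (rule lin_recip_zero[OF P1])
  moreover have "(d-c)/2 = 0" by (rule lin_recip_zero[OF P2])
  ultimately have dc: "d = 0" "c = 0" by auto
  with P1[of 1] show ?thesis by simp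
qed




lemma perp2_exists:
  fixes a b :: "'a::euclidean_space"
  assumes "DIM('a) \<ge> 3"
  obtains e where "norm e = 1" "e \<bullet> a = 0" "e \<bullet> b = 0"
proof -
  have "dim {a,b} \<le> card {a,b}" by (rule dim_le_card) (auto intro: span_base)
  also have "\<dots> \<le> 2" by (simp add: card_insert_le_m1)
  finally have "dim {a,b} < DIM('a)" using assms by linarith
  then obtain x where x: "x \<noteq> 0" "\<And>y. y \<in> span {a,b} \<Longrightarrow> orthogonal x y"
    using orthogonal_to_subspace_exists[of "{a,b}"] by blast
  have "x \<bullet> a = 0" "x \<bullet> b = 0" using x(2)[of a] x(2)[of b] by (auto simp: orthogonal_def span_base)
  then show ?thesis using x(1)
    by (intro that[of "(1/norm x) *\<^sub>R x"]) auto
qed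

lemma wedge_extend:
  fixes g0 g1 g2 u :: "('a::euclidean_space \<times> 'b::euclidean_space)"
  assumes dA: "DIM('a) \<ge> 3" and dB: "DIM('b) \<ge> 3"
    and H: "\<forall>n\<in>Ein_tilde. g0\<bullet>n > 0 \<and> g1\<bullet>n > 0 \<longrightarrow> g2\<bullet>n > 0"
    and u: "g0\<bullet>u > 0" "g1\<bullet>u > 0"
  shows "g2\<bullet>u > 0"
proof -
  obtain e where e: "norm e = 1" "e \<bullet> fst g0 = 0" "e \<bullet> fst g1 = 0"
    using perp2_exists[OF dA] by blast
  obtain f where f: "norm f = 1" "f \<bullet> snd g0 = 0" "f \<bullet> snd g1 = 0"
    using perp2_exists[OF dB] by blast
  have ee: "e \<bullet> e = 1" and ff: "f \<bullet> f = 1" using e(1) f(1) by (simp_all add: dot_square_norm)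
  define x where "x = fst u"
  define y where "y = snd u"
  define \<alpha> where "\<alpha> = x \<bullet> e"
  define \<beta> where "\<beta> = y \<bullet> f"
  define K where "K = y\<bullet>y - \<beta>^2 - x\<bullet>x + \<alpha>^2"
  define d where "d = fst g2 \<bullet> e"
  define c where "c = snd g2 \<bullet> f"
  define C where "C = g2\<bullet>u - \<alpha>*d - \<beta>*c"
  have main: "C + d*X + c*Y > 0" if XY: "X^2 - Y^2 = K" for X Y
  proof -
    define n where "n = (x + (X - \<alpha>) *\<^sub>R e, y + (Y - \<beta>) *\<^sub>R f)"
    have gi: "g\<bullet>n = g\<bullet>u + (X - \<alpha>) * (fst g \<bullet> e) + (Y - \<beta>) * (snd g \<bullet> f)" for g
      by (simp add: n_def x_def y_def inner_prod_def inner_add_right algebra_simps)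
    have n0: "g0\<bullet>n = g0\<bullet>u" using gi[of g0] e f by (simp add: inner_commute)
    have n1: "g1\<bullet>n = g1\<bullet>u" using gi[of g1] e f by (simp add: inner_commute)
    have n2: "g2\<bullet>n = C + d*X + c*Y" using gi[of g2] by (simp add: C_def d_def c_def algebra_simps)
    have "pform n n = -((x + (X - \<alpha>) *\<^sub>R e)\<bullet>(x + (X - \<alpha>) *\<^sub>R e)) + (y + (Y - \<beta>) *\<^sub>R f)\<bullet>(y + (Y - \<beta>) *\<^sub>R f)"
      by (simp add: pform_def n_def)
    also have "\<dots> = -(x\<bullet>x + 2*(X-\<alpha>)*\<alpha> + (X-\<alpha>)^2) + (y\<bullet>y + 2*(Y-\<beta>)*\<beta> + (Y-\<beta>)^2)"
      using ee ff by (simp add: inner_add_left inner_add_right \<alpha>_def \<beta>_def inner_commute power2_eq_square algebra_simps)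
    also have "\<dots> = 0" using XY unfolding K_def by (simp add: power2_eq_square algebra_simps)
    finally have nn: "pform n n = 0" .
    have "n \<noteq> 0" using n0 u by auto
    hence "norm n > 0" by simp
    have nE: "(1/norm n) *\<^sub>R n \<in> Ein_tilde" by (rule Ein_scale[OF nn \<open>n \<noteq> 0\<close>])
    have "g0 \<bullet> ((1/norm n) *\<^sub>R n) > 0" "g1 \<bullet> ((1/norm n) *\<^sub>R n) > 0"
      using n0 n1 u \<open>norm n > 0\<close> by simp_all
    with H nE have "g2 \<bullet> ((1/norm n) *\<^sub>R n) > 0" by blast
    hence "g2\<bullet>n > 0" using \<open>norm n > 0\<close> by (simp add: zero_less_divide_iff)
    thus ?thesis using n2 by simp
  qed
  have "d = 0 \<and> c = 0 \<and> C > 0" by (rule hyperbola_pos[OF main])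
  thus ?thesis by (auto simp add: C_def)
qed




lemma half_connected:
  fixes w :: "'a::euclidean_space \<times> 'b::euclidean_space"
  assumes ww: "pform w w = 0" and w0: "w \<noteq> 0"
  shows "connected {u \<in> Ein_tilde. pform w u > 0}"
proof -
  define f0 where "f0 = (1/(norm w)^2) *\<^sub>R jj w"
  have wf: "pform w f0 = 1" using w0 by (simp add: f0_def pform_simps pform_jj_self)
  have fw: "pform f0 w = 1" using wf by (simp add: pform_sym)
  have ff: "pform f0 f0 = 0" using ww by (simp add: f0_def pform_simps pform_jj_jj)
  define \<phi> where "\<phi> z = f0 + z - (pform z z / 2) *\<^sub>R w" for z
  define g where "g z = (1/norm (\<phi> z)) *\<^sub>R \<phi> z" for z
  define W where "W = {z. pform w z = 0 \<and> pform f0 z = 0}"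
  have Weq: "W = {z. jj w \<bullet> z = 0} \<inter> {z. jj f0 \<bullet> z = 0}"
    by (auto simp: W_def pform_jj)
  have cW: "connected W" unfolding Weq
    by (intro convex_connected convex_Int convex_hyperplane)
  have wphi: "pform w (\<phi> z) = 1" if "z \<in> W" for z
    using that ww wf by (simp add: \<phi>_def W_def pform_simps)
  have phi0: "\<phi> z \<noteq> 0" if "z \<in> W" for z
    using wphi[OF that] by (auto simp: pform_def)
  have phiphi: "pform (\<phi> z) (\<phi> z) = 0" if "z \<in> W" for z
  proof -
    have zw: "pform z w = 0" "pform z f0 = 0" using that by (simp_all add: W_def pform_sym)
    show ?thesis using that zw ww wf fw ff
      by (simp add: \<phi>_def W_def pform_simps algebra_simps)
  qed
  have contphi: "continuous_on W \<phi>"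
    unfolding \<phi>_def pform_jj jj_def by (intro continuous_intros) auto
  have contg: "continuous_on W g"
    unfolding g_def using phi0 by (intro continuous_intros contphi) auto
  have "{u \<in> Ein_tilde. pform w u > 0} = g ` W"
  proof
    show "g ` W \<subseteq> {u \<in> Ein_tilde. pform w u > 0}"
    proof
      fix v assume "v \<in> g ` W"
      then obtain z where z: "z \<in> W" "v = g z" by blast
      have "v \<in> Ein_tilde" using Ein_scale[OF phiphi[OF z(1)] phi0[OF z(1)]] z by (simp add: g_def)
      moreover have "pform w v > 0" using z wphi[OF z(1)] phi0[OF z(1)]
        by (simp add: g_def pform_simps)
      ultimately show "v \<in> {u \<in> Ein_tilde. pform w u > 0}" by simp
    qed
  next
    show "{u \<in> Ein_tilde. pform w u > 0} \<subseteq> g ` W"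
    proof
      fix u assume u: "u \<in> {u \<in> Ein_tilde. pform w u > 0}"
      define c where "c = pform w u"
      have c: "c > 0" using u by (simp add: c_def)
      have uu: "pform u u = 0" "norm u = 1" using u by (auto simp: Ein_tilde_def)
      define u' where "u' = (1/c) *\<^sub>R u"
      define t where "t = pform f0 u'"
      define z where "z = u' - f0 - t *\<^sub>R w"
      have wu': "pform w u' = 1" using c by (simp add: u'_def pform_simps c_def)
      have u'u': "pform u' u' = 0" using uu by (simp add: u'_def pform_simps)
      have zW: "z \<in> W" using wu' ww wf ff fw
        by (simp add: W_def z_def t_def pform_simps)
      have u'f: "pform u' f0 = t" "pform u' w = 1" using wu' by (simp_all add: t_def pform_sym)
      have zz: "pform z z = -2*t"
        using u'u' ww wf fw ff u'f wu' by (simp add: z_def pform_simps algebra_simps t_def)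
      have "\<phi> z = u'" unfolding \<phi>_def zz by (simp add: z_def)
      hence "g z = (1/norm u') *\<^sub>R u'" by (simp add: g_def)
      also have "\<dots> = u" using c uu by (simp add: u'_def)
      finally show "u \<in> g ` W" using zW by (metis image_eqI)
    qed
  qed
  thus ?thesis using connected_continuous_image[OF contg cW] by simp
qed

lemma patch_char:
  fixes M :: "('a::euclidean_space \<times> 'b::euclidean_space) set"
  assumes "minkowski_patch M"
  shows "\<exists>w. w \<noteq> 0 \<and> M = {u \<in> Ein_tilde. pform w u > 0}"
proof -
  obtain w where w: "w \<noteq> 0" "pform w w = 0" and
     C: "M \<in> components {u \<in> Ein_tilde. pform w u \<noteq> 0}"
    using assms unfolding minkowski_patch_def by blast
  let ?S = "{u \<in> Ein_tilde. pform w u \<noteq> 0}"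
  have Cm: "M \<noteq> {}" "M \<subseteq> ?S" "connected M"
    "\<And>D. D \<noteq> {} \<Longrightarrow> M \<subseteq> D \<Longrightarrow> D \<subseteq> ?S \<Longrightarrow> connected D \<Longrightarrow> D = M"
    using C unfolding in_components_maximal by blast+
  obtain x where x: "x \<in> M" using Cm(1) by blast
  have sign: "pform v y > 0" if v: "v = w \<or> v = -w" and xv: "pform v x > 0" and y: "y \<in> M" for v y
  proof (rule ccontr)
    assume "\<not> pform v y > 0"
    hence "jj v \<bullet> y \<le> 0" by (simp add: pform_jj)
    moreover have "0 \<le> jj v \<bullet> x" using xv by (simp add: pform_jj)
    ultimately obtain z where "z \<in> M" "jj v \<bullet> z = 0"
      using connected_ivt_hyperplane[OF Cm(3) y x] by blast
    hence "pform w z = 0" using v by (auto simp: pform_jj jj_minus)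
    with \<open>z \<in> M\<close> Cm(2) show False by auto
  qed
  have key: "\<exists>v. v \<noteq> 0 \<and> M = {u \<in> Ein_tilde. pform v u > 0}"
    if v: "v = w \<or> v = -w" and xv: "pform v x > 0" for v
  proof -
    have v0: "v \<noteq> 0" "pform v v = 0" using v w by (auto simp: pform_def)
    let ?D = "{u \<in> Ein_tilde. pform v u > 0}"
    have "M \<subseteq> ?D" using sign[OF v xv] Cm(2) by auto
    moreover have "?D \<subseteq> ?S" using v by (auto simp: pform_minus_left)
    ultimately have "?D = M" using Cm(4)[of ?D] half_connected[OF v0(2) v0(1)] Cm(1) by blast
    thus ?thesis using v0 by blast
  qed
  have "pform w x \<noteq> 0" using x Cm(2) by auto
  hence "pform w x > 0 \<or> pform (-w) x > 0" by (auto simp: pform_minus_left)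
  thus ?thesis using key by blast
qed




lemma core:
  fixes w0 w1 w2 :: "'a::euclidean_space \<times> 'b::euclidean_space"
  assumes dA: "DIM('a) \<ge> 3" and dB: "DIM('b) \<ge> 3"
    and H: "\<forall>n\<in>Ein_tilde. pform w0 n > 0 \<and> pform w1 n > 0 \<longrightarrow> pform w2 n > 0"
    and N1: "\<exists>n\<in>Ein_tilde. pform w0 n > 0 \<and> pform w1 n > 0"
    and N2: "\<exists>n\<in>Ein_tilde. pform w0 n > 0 \<and> \<not> pform w2 n > 0"
    and w2: "w2 \<noteq> 0"
  shows "pform w0 u = 0 \<Longrightarrow> (pform w1 u > 0 \<longleftrightarrow> pform w2 u > 0)"
proof -
  assume u0: "pform w0 u = 0"
  have HV: "\<forall>y. jj w0 \<bullet> y > 0 \<and> jj w1 \<bullet> y > 0 \<longrightarrow> jj w2 \<bullet> y > 0"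
  proof (intro allI impI)
    fix y assume "jj w0 \<bullet> y > 0 \<and> jj w1 \<bullet> y > 0"
    then show "jj w2 \<bullet> y > 0"
      using wedge_extend[OF dA dB, of "jj w0" "jj w1" "jj w2" y] H by (auto simp: pform_jj)
  qed
  obtain y0 where y0: "jj w0 \<bullet> y0 > 0" "jj w1 \<bullet> y0 > 0" using N1 by (auto simp: pform_jj)
  obtain a b where ab: "a \<ge> 0" "b \<ge> 0" "jj w2 = a *\<^sub>R jj w0 + b *\<^sub>R jj w1"
    using farkas2[OF HV y0] by blast
  have lin: "pform w2 x = a * pform w0 x + b * pform w1 x" for x
    by (simp add: pform_jj ab(3) inner_add_left)
  have "b > 0"
  proof (rule ccontr)
    assume "\<not> b > 0" hence b0: "b = 0" using ab by simp
    obtain n where n: "pform w0 n > 0" "\<not> pform w2 n > 0" using N2 by blast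
    have "a * pform w0 n \<le> 0" using n lin[of n] b0 by simp
    hence "a \<le> 0" using n(1) by (simp add: mult_le_0_iff)
    hence "a = 0" using ab by simp
    hence "jj w2 = 0" using ab(3) b0 by simp
    thus False using w2 by simp
  qed
  show ?thesis using lin[of u] u0 \<open>b > 0\<close> by (simp add: zero_less_mult_iff)
qed

lemma pform_minus_right: "pform u (- a) = - pform u a"
  by (simp add: pform_def)

lemma halfspace_facts:
  fixes v :: "'a::real_inner \<times> 'b::real_inner"
  assumes "v \<noteq> 0"
  shows "halfspace v \<alpha> \<noteq> {}" "halfspace v \<beta> \<noteq> UNIV"
proof -
  have nv: "(norm v)^2 > 0" using assms by simp
  have "pform v (((\<bar>\<alpha>\<bar>+1)/(norm v)^2) *\<^sub>R jj v) = \<bar>\<alpha>\<bar>+1"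
    using nv by (simp add: pform_simps pform_jj_self)
  moreover have "\<alpha> < \<bar>\<alpha>\<bar>+1" by linarith
  ultimately have "((\<bar>\<alpha>\<bar>+1)/(norm v)^2) *\<^sub>R jj v \<in> halfspace v \<alpha>" unfolding halfspace_def by simp
  thus "halfspace v \<alpha> \<noteq> {}" by blast
  have "pform v ((-((\<bar>\<beta>\<bar>+1)/(norm v)^2)) *\<^sub>R jj v) = -(\<bar>\<beta>\<bar>+1)"
    using nv by (simp add: pform_simps pform_minus_right pform_jj_self)
  moreover have "-(\<bar>\<beta>\<bar>+1) < \<beta>" by linarith
  ultimately have "(-((\<bar>\<beta>\<bar>+1)/(norm v)^2)) *\<^sub>R jj v \<notin> halfspace v \<beta>" unfolding halfspace_def by simp
  thus "halfspace v \<beta> \<noteq> UNIV" by blast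
qed

lemma oneside:
  fixes w0 w1 w2 :: "'a::euclidean_space \<times> 'b::euclidean_space"
    and s :: "'a \<times> 'b \<Rightarrow> 'c::real_inner \<times> 'd::real_inner"
  assumes dA: "DIM('a) \<ge> 3" and dB: "DIM('b) \<ge> 3"
    and M0: "M0 = {u \<in> Ein_tilde. pform w0 u > 0}"
    and M1: "M1 = {u \<in> Ein_tilde. pform w1 u > 0}"
    and M2: "M2 = {u \<in> Ein_tilde. pform w2 u > 0}"
    and w2: "w2 \<noteq> 0"
    and bij: "bij_betw s M0 UNIV"
    and v: "v \<noteq> 0"
    and h1: "s ` (M0 \<inter> M1) = halfspace v \<alpha>"
    and h2: "s ` (M0 \<inter> M2) = halfspace v \<beta>"
    and le: "\<beta> \<le> \<alpha>"
  shows "\<forall>u. pform w0 u = 0 \<longrightarrow> (pform w1 u > 0 \<longleftrightarrow> pform w2 u > 0)"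
proof -
  have inj: "inj_on s M0" and surj: "s ` M0 = UNIV" using bij by (auto simp: bij_betw_def)
  have sub: "halfspace v \<alpha> \<subseteq> halfspace v \<beta>" using le by (auto simp: halfspace_def)
  have H: "\<forall>n\<in>Ein_tilde. pform w0 n > 0 \<and> pform w1 n > 0 \<longrightarrow> pform w2 n > 0"
  proof (intro ballI impI)
    fix n assume n: "n \<in> Ein_tilde" "pform w0 n > 0 \<and> pform w1 n > 0"
    hence nM: "n \<in> M0 \<inter> M1" using M0 M1 by auto
    hence "s n \<in> s ` (M0 \<inter> M2)" using h1 h2 sub by blast
    then obtain n' where n': "n' \<in> M0 \<inter> M2" "s n' = s n" unfolding image_iff by metis
    have "n' = n" using inj n'(1) nM n'(2) by (auto dest: inj_onD)
    thus "pform w2 n > 0" using n' M2 by auto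
  qed
  have N1: "\<exists>n\<in>Ein_tilde. pform w0 n > 0 \<and> pform w1 n > 0"
  proof -
    have "halfspace v \<alpha> \<noteq> {}" using halfspace_facts[OF v] by blast
    hence "M0 \<inter> M1 \<noteq> {}" using h1 by auto
    thus ?thesis using M0 M1 by auto
  qed
  have N2: "\<exists>n\<in>Ein_tilde. pform w0 n > 0 \<and> \<not> pform w2 n > 0"
  proof -
    obtain z where z: "z \<notin> halfspace v \<beta>" using halfspace_facts(2)[OF v] by blast
    then obtain n where n: "n \<in> M0" "s n = z" using surj by (metis UNIV_I imageE)
    have "n \<notin> M2" using n z h2 by blast
    thus ?thesis using n M0 M2 by auto
  qed
  show ?thesis using core[OF dA dB H N1 N2 w2] by blast
qed

theorem lemma5p5:
  fixes M0 M1 M2 :: "((real \<times> (real^'p)) \<times> (real \<times> (real^'q))) set"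
    and s :: "(real \<times> (real^'p)) \<times> (real \<times> (real^'q)) \<Rightarrow> (real^'p) \<times> (real^'q)"
    and v :: "(real^'p) \<times> (real^'q)"
    and \<alpha> \<beta> :: real
  assumes "min CARD('p) CARD('q) \<ge> 2"
    and "minkowski_patch M0" and "minkowski_patch M1" and "minkowski_patch M2"
    and "stereographic_projection M0 s"
    and "pform v v = 0" and "v \<noteq> 0"
    and "s ` (M0 \<inter> M1) = halfspace v \<alpha>"
    and "s ` (M0 \<inter> M2) = halfspace v \<beta>"
  shows "(top_of_set Ein_tilde) frontier_of M0 \<inter> M1 = (top_of_set Ein_tilde) frontier_of M0 \<inter> M2"
proof -
  have dA: "DIM(real \<times> (real^'p)) \<ge> 3" and dB: "DIM(real \<times> (real^'q)) \<ge> 3" using assms(1) by auto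
  obtain w0 where w0: "w0 \<noteq> 0" "M0 = {u \<in> Ein_tilde. pform w0 u > 0}" using patch_char[OF assms(2)] by blast
  obtain w1 where w1: "w1 \<noteq> 0" "M1 = {u \<in> Ein_tilde. pform w1 u > 0}" using patch_char[OF assms(3)] by blast
  obtain w2 where w2: "w2 \<noteq> 0" "M2 = {u \<in> Ein_tilde. pform w2 u > 0}" using patch_char[OF assms(4)] by blast
  have bij: "bij_betw s M0 UNIV" using assms(5) by (simp add: stereographic_projection_def diffeo_betw_def)
  have Z: "\<forall>u. pform w0 u = 0 \<longrightarrow> (pform w1 u > 0 \<longleftrightarrow> pform w2 u > 0)"
  proof (cases "\<beta> \<le> \<alpha>")
    case True
    show ?thesis by (rule oneside[OF dA dB w0(2) w1(2) w2(2) w2(1) bij assms(7,8,9) True])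
  next
    case False
    have "\<forall>u. pform w0 u = 0 \<longrightarrow> (pform w2 u > 0 \<longleftrightarrow> pform w1 u > 0)"
      by (rule oneside[OF dA dB w0(2) w2(2) w1(2) w1(1) bij assms(7,9,8)]) (use False in simp)
    thus ?thesis by blast
  qed
  let ?X = "top_of_set (Ein_tilde :: ((real \<times> (real^'p)) \<times> (real \<times> (real^'q))) set)"
  have fr: "?X frontier_of M0 \<subseteq> {u \<in> Ein_tilde. pform w0 u = 0}"
  proof -
    have c1: "?X closure_of M0 \<subseteq> Ein_tilde \<inter> {u. jj w0 \<bullet> u \<ge> 0}"
      by (rule closure_of_minimal) (auto simp: w0(2) pform_jj intro!: closedin_closed_Int closed_halfspace_ge)
    have c2: "?X closure_of (topspace ?X - M0) \<subseteq> Ein_tilde \<inter> {u. jj w0 \<bullet> u \<le> 0}"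
      by (rule closure_of_minimal) (auto simp: w0(2) pform_jj intro!: closedin_closed_Int closed_halfspace_le)
    show ?thesis unfolding frontier_of_closures using c1 c2 by (force simp: pform_jj)
  qed
  show ?thesis
  proof
    show "?X frontier_of M0 \<inter> M1 \<subseteq> ?X frontier_of M0 \<inter> M2"
      using fr Z w1(2) w2(2) by blast
    show "?X frontier_of M0 \<inter> M2 \<subseteq> ?X frontier_of M0 \<inter> M1"
      using fr Z w1(2) w2(2) by blast
  qed
qed


end
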